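(* For all $x,y\ge 1$ and $n>\max(x,y)$, the minimum possible number of edges in any $(x,y)$ task-dependency graph produced by the $(x,y)$ edge-addition process on $n$ vertices is $n-\min(x,y)$.
   Context: A task-dependency graph is a finite directed acyclic graph (no loops, no multiple edges). A vertex is initial if it has in-degree $0$ and terminal if it has out-degree $0$ (an isolated vertex is both). An $(x,y)$ task-dependency graph has exactly $x$ initial and exactly $y$ terminal vertices. The $(x,y)$ edge-addition process on $n$ vertices: start with the empty graph on $\{1,\dots,n\}$ and repeatedly add, uniformly at random, an edge $(a,b)$ with $a<b$ not yet present; if an addition would cause fewer than $x$ initial vertices or fewer than $y$ terminal vertices, it is cancelled. The process halts if the graph after some edge addition is an $(x,y)$ task-dependency graph, or if no more edges can be added; the produced graph is the final graph (over all possible runs). *)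

theory Defs
  imports Main
begin

definition possible_edges :: "nat \<Rightarrow> (nat \<times> nat) set" where
  "possible_edges n = {(a, b). 1 \<le> a \<and> a < b \<and> b \<le> n}"

definition initial_vertices :: "nat \<Rightarrow> (nat \<times> nat) set \<Rightarrow> nat set" where
  "initial_vertices n E = {v \<in> {1..n}. \<forall>u. (u, v) \<notin> E}"

definition terminal_vertices :: "nat \<Rightarrow> (nat \<times> nat) set \<Rightarrow> nat set" where
  "terminal_vertices n E = {v \<in> {1..n}. \<forall>w. (v, w) \<notin> E}"

text \<open>(x,y) task-dependency graph: exactly x initial and y terminal vertices
  (acyclicity is automatic since all edges go from smaller to larger vertex).\<close>
definition is_tdg :: "nat \<Rightarrow> nat \<Rightarrow> nat \<Rightarrow> (nat \<times> nat) set \<Rightarrow> bool" where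
  "is_tdg x y n E \<longleftrightarrow> card (initial_vertices n E) = x \<and> card (terminal_vertices n E) = y"

text \<open>An edge e can be (successfully, i.e. without cancellation) added to E.\<close>
definition addable :: "nat \<Rightarrow> nat \<Rightarrow> nat \<Rightarrow> (nat \<times> nat) set \<Rightarrow> nat \<times> nat \<Rightarrow> bool" where
  "addable x y n E e \<longleftrightarrow> e \<in> possible_edges n \<and> e \<notin> E \<and>
     card (initial_vertices n (insert e E)) \<ge> x \<and>
     card (terminal_vertices n (insert e E)) \<ge> y"

text \<open>Graphs reachable in some run of the (x,y) edge-addition process on n vertices
  (cancelled additions leave the graph unchanged, so they are not recorded).\<close>
inductive reachable :: "nat \<Rightarrow> nat \<Rightarrow> nat \<Rightarrow> (nat \<times> nat) set \<Rightarrow> bool"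
  for x y n where
  empty: "reachable x y n {}"
| step: "reachable x y n E \<Longrightarrow> \<not> is_tdg x y n E \<Longrightarrow> addable x y n E e
          \<Longrightarrow> reachable x y n (insert e E)"

definition final_graph :: "nat \<Rightarrow> nat \<Rightarrow> nat \<Rightarrow> (nat \<times> nat) set \<Rightarrow> bool" where
  "final_graph x y n E \<longleftrightarrow> reachable x y n E \<and>
     ((E \<noteq> {} \<and> is_tdg x y n E) \<or> (\<forall>e. \<not> addable x y n E e))"

end

theory Submission
  imports Defs
begin

lemma pe_finite: "finite (possible_edges n)"
proof -
  have "possible_edges n \<subseteq> {1..n} \<times> {1..n}" unfolding possible_edges_def by auto
  then show ?thesis by (rule finite_subset) auto
qed

lemma lb_init:
  assumes "E \<subseteq> possible_edges n"
  shows "n - card (initial_vertices n E) \<le> card E"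
proof -
  have fE: "finite E" using assms pe_finite finite_subset by blast
  have sub: "{1..n} - initial_vertices n E \<subseteq> snd ` E"
    unfolding initial_vertices_def by force
  have "initial_vertices n E \<subseteq> {1..n}" unfolding initial_vertices_def by auto
  then have "card ({1..n} - initial_vertices n E) = n - card (initial_vertices n E)"
    by (simp add: card_Diff_subset finite_subset)
  moreover have "card ({1..n} - initial_vertices n E) \<le> card (snd ` E)"
    using sub fE by (simp add: card_mono)
  moreover have "card (snd ` E) \<le> card E" using fE by (rule card_image_le)
  ultimately show ?thesis by linarith
qed

lemma lb_term:
  assumes "E \<subseteq> possible_edges n"
  shows "n - card (terminal_vertices n E) \<le> card E"
proof -
  have fE: "finite E" using assms pe_finite finite_subset by blast
  have sub: "{1..n} - terminal_vertices n E \<subseteq> fst ` E"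
    unfolding terminal_vertices_def by force
  have "terminal_vertices n E \<subseteq> {1..n}" unfolding terminal_vertices_def by auto
  then have "card ({1..n} - terminal_vertices n E) = n - card (terminal_vertices n E)"
    by (simp add: card_Diff_subset finite_subset)
  moreover have "card ({1..n} - terminal_vertices n E) \<le> card (fst ` E)"
    using sub fE by (simp add: card_mono)
  moreover have "card (fst ` E) \<le> card E" using fE by (rule card_image_le)
  ultimately show ?thesis by linarith
qed

lemma lb_tdg:
  assumes "E \<subseteq> possible_edges n" "is_tdg x y n E"
  shows "n - min x y \<le> card E"
  using lb_init[OF assms(1)] lb_term[OF assms(1)] assms(2) unfolding is_tdg_def
  by (simp add: min_def)

lemma reach_subset:
  assumes "reachable x y n E" shows "E \<subseteq> possible_edges n"
  using assms by induct (auto simp: addable_def)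

lemma mono_init:
  assumes "F \<subseteq> E" shows "card (initial_vertices n E) \<le> card (initial_vertices n F)"
  by (rule card_mono) (use assms in \<open>auto simp: initial_vertices_def\<close>)

lemma mono_term:
  assumes "F \<subseteq> E" shows "card (terminal_vertices n E) \<le> card (terminal_vertices n F)"
  by (rule card_mono) (use assms in \<open>auto simp: terminal_vertices_def\<close>)

lemma reach_all:
  assumes E: "E \<subseteq> possible_edges n" and c: "card E \<le> n - min x y" and t: "is_tdg x y n E"
  shows "reachable x y n E"
proof -
  have fE: "finite E" using E pe_finite finite_subset by blast
  have "\<forall>F. F \<subseteq> E \<longrightarrow> reachable x y n F"
  proof (intro allI impI)
    fix F assume "F \<subseteq> E"
    have "finite F" using \<open>F \<subseteq> E\<close> fE finite_subset by blast
    then show "reachable x y n F" using \<open>F \<subseteq> E\<close>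
    proof (induct rule: finite_subset_induct')
      case empty then show ?case by (rule reachable.empty)
    next
      case (insert a F)
      have "card (insert a F) \<le> card E" using insert fE by (intro card_mono) auto
      then have cF: "card F < n - min x y" using insert c by simp
      have nt: "\<not> is_tdg x y n F"
        using lb_tdg[of F n x y] insert E cF by auto
      have "addable x y n F a"
        unfolding addable_def
        using insert E t mono_init[of "insert a F" E n] mono_term[of "insert a F" E n]
        unfolding is_tdg_def by auto
      then show ?case using insert nt by (intro reachable.step) auto
    qed
  qed
  then show ?thesis by blast
qed

lemma exists_case1:
  fixes x y n :: nat
  assumes "x \<ge> 1" "x \<le> y" "y < n"
  shows "\<exists>E. E \<subseteq> possible_edges n \<and> card E \<le> n - x \<and> is_tdg x y n E"
proof -
  define c where "c = n + x - y"
  have cx: "x < c" "c \<le> n" using assms by (auto simp: c_def)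
  define E where "E = (\<lambda>v. (v, Suc v)) ` {x..<c} \<union> (\<lambda>v. (x, v)) ` {c<..n}"
  have "E \<subseteq> possible_edges n" using assms cx unfolding E_def possible_edges_def by auto
  moreover have "card E \<le> n - x"
  proof -
    have "card E \<le> card ((\<lambda>v. (v, Suc v)) ` {x..<c}) + card ((\<lambda>v. (x, v)) ` {c<..n})"
      unfolding E_def by (rule card_Un_le)
    also have "\<dots> \<le> card {x..<c} + card {c<..n}"
      by (intro add_mono card_image_le) auto
    finally show ?thesis using cx by simp
  qed
  moreover have "initial_vertices n E = {1..x}"
  proof -
    have "v \<in> initial_vertices n E \<longleftrightarrow> v \<in> {1..x}" for v
    proof
      assume "v \<in> initial_vertices n E"
      then have v: "v \<in> {1..n}" "\<And>u. (u, v) \<notin> E" unfolding initial_vertices_def by auto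
      show "v \<in> {1..x}"
      proof (rule ccontr)
        assume "v \<notin> {1..x}"
        then have "x < v" using v by auto
        show False
        proof (cases "v \<le> c")
          case True
          then have "(v - 1, v) \<in> E" unfolding E_def using \<open>x < v\<close>
            by (intro UnI1 image_eqI[of _ _ "v - 1"]) auto
          then show False using v by blast
        next
          case False
          then have "(x, v) \<in> E" unfolding E_def using v by auto
          then show False using v by blast
        qed
      qed
    next
      assume "v \<in> {1..x}"
      then show "v \<in> initial_vertices n E"
        unfolding initial_vertices_def E_def using cx assms by auto
    qed
    then show ?thesis by blast
  qed
  moreover have "terminal_vertices n E = {1..<x} \<union> {c..n}"
  proof -
    have "v \<in> terminal_vertices n E \<longleftrightarrow> v \<in> {1..<x} \<union> {c..n}" for v
    proof
      assume "v \<in> terminal_vertices n E"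
      then have v: "v \<in> {1..n}" "\<And>w. (v, w) \<notin> E" unfolding terminal_vertices_def by auto
      show "v \<in> {1..<x} \<union> {c..n}"
      proof (rule ccontr)
        assume "v \<notin> {1..<x} \<union> {c..n}"
        then have "x \<le> v" "v < c" using v by auto
        then have "(v, Suc v) \<in> E" unfolding E_def by auto
        then show False using v by blast
      qed
    next
      assume "v \<in> {1..<x} \<union> {c..n}"
      then show "v \<in> terminal_vertices n E"
        unfolding terminal_vertices_def E_def using cx assms by auto
    qed
    then show ?thesis by blast
  qed
  moreover have "card ({1..<x} \<union> {c..n}) = y"
    using cx assms by (subst card_Un_disjoint) (auto simp: c_def)
  ultimately show ?thesis unfolding is_tdg_def by auto
qed

lemma exists_case2:
  fixes x y n :: nat
  assumes "y \<ge> 1" "y < x" "x < n"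
  shows "\<exists>E. E \<subseteq> possible_edges n \<and> card E \<le> n - y \<and> is_tdg x y n E"
proof -
  define c where "c = x - y + 1"
  define d where "d = n + 1 - y"
  have cd: "1 \<le> c" "c < d" "d \<le> n" using assms by (auto simp: c_def d_def)
  define E where "E = (\<lambda>v. (v, Suc v)) ` {c..<d} \<union> (\<lambda>v. (v, d)) ` {1..<c}"
  have "E \<subseteq> possible_edges n" using assms cd unfolding E_def possible_edges_def by auto
  moreover have "card E \<le> n - y"
  proof -
    have "card E \<le> card ((\<lambda>v. (v, Suc v)) ` {c..<d}) + card ((\<lambda>v. (v, d)) ` {1..<c})"
      unfolding E_def by (rule card_Un_le)
    also have "\<dots> \<le> card {c..<d} + card {1..<c}"
      by (intro add_mono card_image_le) auto
    finally show ?thesis using cd by (simp add: d_def)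
  qed
  moreover have "initial_vertices n E = {1..c} \<union> {Suc d..n}"
  proof -
    have "v \<in> initial_vertices n E \<longleftrightarrow> v \<in> {1..c} \<union> {Suc d..n}" for v
    proof
      assume "v \<in> initial_vertices n E"
      then have v: "v \<in> {1..n}" "\<And>u. (u, v) \<notin> E" unfolding initial_vertices_def by auto
      show "v \<in> {1..c} \<union> {Suc d..n}"
      proof (rule ccontr)
        assume "v \<notin> {1..c} \<union> {Suc d..n}"
        then have "c < v" "v \<le> d" using v by auto
        then have "(v - 1, v) \<in> E" unfolding E_def
          by (intro UnI1 image_eqI[of _ _ "v - 1"]) auto
        then show False using v by blast
      qed
    next
      assume "v \<in> {1..c} \<union> {Suc d..n}"
      then show "v \<in> initial_vertices n E"
        unfolding initial_vertices_def E_def using cd by auto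
    qed
    then show ?thesis by blast
  qed
  moreover have "terminal_vertices n E = {d..n}"
  proof -
    have "v \<in> terminal_vertices n E \<longleftrightarrow> v \<in> {d..n}" for v
    proof
      assume "v \<in> terminal_vertices n E"
      then have v: "v \<in> {1..n}" "\<And>w. (v, w) \<notin> E" unfolding terminal_vertices_def by auto
      show "v \<in> {d..n}"
      proof (rule ccontr)
        assume "v \<notin> {d..n}"
        then have "v < d" using v by auto
        show False
        proof (cases "v < c")
          case True
          then have "(v, d) \<in> E" unfolding E_def using v by auto
          then show False using v by blast
        next
          case False
          then have "(v, Suc v) \<in> E" unfolding E_def using \<open>v < d\<close> by auto
          then show False using v by blast
        qed
      qed
    next
      assume "v \<in> {d..n}"
      then show "v \<in> terminal_vertices n E"
        unfolding terminal_vertices_def E_def using cd by auto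
    qed
    then show ?thesis by blast
  qed
  moreover have "card ({1..c} \<union> {Suc d..n}) = x"
    using cd assms by (subst card_Un_disjoint) (auto simp: c_def d_def)
  moreover have "card {d..n} = y" using assms by (simp add: d_def)
  ultimately show ?thesis unfolding is_tdg_def by auto
qed

theorem mainTheorem11:
  fixes x y n :: nat
  assumes "x \<ge> 1" and "y \<ge> 1" and "n > max x y"
  shows "(\<exists>E. final_graph x y n E \<and> is_tdg x y n E \<and> card E = n - min x y) \<and>
         (\<forall>E. final_graph x y n E \<and> is_tdg x y n E \<longrightarrow> card E \<ge> n - min x y)"
proof
  show "\<forall>E. final_graph x y n E \<and> is_tdg x y n E \<longrightarrow> card E \<ge> n - min x y"
  proof (intro allI impI)
    fix E assume h: "final_graph x y n E \<and> is_tdg x y n E"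
    then have "reachable x y n E" unfolding final_graph_def by simp
    then have "E \<subseteq> possible_edges n" by (rule reach_subset)
    then show "card E \<ge> n - min x y" using h lb_tdg by blast
  qed
next
  have "\<exists>E. E \<subseteq> possible_edges n \<and> card E \<le> n - min x y \<and> is_tdg x y n E"
  proof (cases "x \<le> y")
    case True
    then have "min x y = x" by simp
    then show ?thesis using exists_case1[of x y n] assms True by simp
  next
    case False
    then have "min x y = y" by simp
    then show ?thesis using exists_case2[of y x n] assms False by simp
  qed
  then obtain E where E: "E \<subseteq> possible_edges n" "card E \<le> n - min x y" "is_tdg x y n E"
    by blast
  have ce: "card E = n - min x y" using E lb_tdg[of E n x y] by simp
  have r: "reachable x y n E" using reach_all[OF E] .
  have "n - min x y > 0" using assms by (simp add: min_def)
  then have "E \<noteq> {}" using ce by auto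
  then show "\<exists>E. final_graph x y n E \<and> is_tdg x y n E \<and> card E = n - min x y"
    using r E ce unfolding final_graph_def by blast
qed

end
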